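(* Let $G$ be a graph with $n$ vertices and $\chi(G)>3$. Then $W(G)\le\min\{3\,\alpha(G),\ n-\alpha(G)\}+1$.
   Context: $\chi(G)$ is the chromatic number and $\alpha(G)$ the independence number (maximum size of a set of pairwise non-adjacent vertices) of $G$; $K_3$ is the complete graph on 3 vertices. Graphs are viewed as structures with an adjacency relation $E$ and equality. For a graph $G$ with $\chi(G)>3$, $W(G)$ is the least $k$ such that some existential-positive first-order sentence (built from atomic formulas $x=y$, $E(x,y)$ using only $\wedge$, $\vee$ and $\exists$) in which at most $k$ distinct variables occur is true in $G$ and false in $K_3$. Equivalently, $W(G)$ is the least $k$ such that for some $r$ Spoiler has a winning strategy in the $r$-round $k$-width 3-coloring game on $G$: in each round Spoiler may erase the colors of some colored vertices and then selects a vertex, which Duplicator colors red, blue or green; at most $k$ vertices may be colored after each round; Duplicator wins if after every round the partial coloring is proper (no two adjacent colored vertices have the same color). *)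

theory Defs
  imports Main
begin

text \<open>A finite simple graph is given by a finite vertex set V and a symmetric,
irreflexive adjacency relation E (only its restriction to V matters).\<close>

definition simple_graph :: "'a set \<Rightarrow> ('a \<Rightarrow> 'a \<Rightarrow> bool) \<Rightarrow> bool" where
  "simple_graph V E \<longleftrightarrow> finite V \<and> (\<forall>u\<in>V. \<forall>w\<in>V. E u w \<longrightarrow> E w u) \<and> (\<forall>u\<in>V. \<not> E u u)"

definition chromatic_number :: "'a set \<Rightarrow> ('a \<Rightarrow> 'a \<Rightarrow> bool) \<Rightarrow> nat" where
  "chromatic_number V E = (LEAST k. \<exists>f :: 'a \<Rightarrow> nat.
      (\<forall>v\<in>V. f v < k) \<and> (\<forall>u\<in>V. \<forall>w\<in>V. E u w \<longrightarrow> f u \<noteq> f w))"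

definition independence_number :: "'a set \<Rightarrow> ('a \<Rightarrow> 'a \<Rightarrow> bool) \<Rightarrow> nat" where
  "independence_number V E = Max {card S | S. S \<subseteq> V \<and> (\<forall>u\<in>S. \<forall>w\<in>S. \<not> E u w)}"

datatype color = Red | Blue | Green

definition proper_partial :: "('a \<Rightarrow> 'a \<Rightarrow> bool) \<Rightarrow> ('a \<rightharpoonup> color) \<Rightarrow> bool" where
  "proper_partial E p \<longleftrightarrow> (\<forall>u w a b. p u = Some a \<and> p w = Some b \<and> E u w \<longrightarrow> a \<noteq> b)"

text \<open>spoiler_wins V E k r p: from position p (current partial colouring), Spoiler has a
strategy in the k-width 3-colouring game guaranteeing that within at most r further rounds the
partial colouring becomes improper. In a round Spoiler erases the colours of a set S of coloured
vertices, then selects a vertex v of G, which Duplicator colours with some colour c; at most k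
vertices may be coloured afterwards.\<close>
fun spoiler_wins :: "'a set \<Rightarrow> ('a \<Rightarrow> 'a \<Rightarrow> bool) \<Rightarrow> nat \<Rightarrow> nat \<Rightarrow> ('a \<rightharpoonup> color) \<Rightarrow> bool" where
  "spoiler_wins V E k 0 p = False"
| "spoiler_wins V E k (Suc r) p =
     (\<exists>S v. S \<subseteq> dom p \<and> v \<in> V \<and> card ((dom p - S) \<union> {v}) \<le> k \<and>
        (\<forall>c. \<not> proper_partial E ((p |` (dom p - S))(v \<mapsto> c))
             \<or> spoiler_wins V E k r ((p |` (dom p - S))(v \<mapsto> c))))"

definition W :: "'a set \<Rightarrow> ('a \<Rightarrow> 'a \<Rightarrow> bool) \<Rightarrow> nat" where
  "W V E = (LEAST k. \<exists>r. spoiler_wins V E k r Map.empty)"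

end

theory Submission imports Defs begin

lemma restrict_dom_self: "p |` dom p = p"
  by (rule ext) (simp add: restrict_map_def domIff)

lemma place_list:
  assumes "finite (dom p)" "distinct xs" "set xs \<subseteq> V" "set xs \<inter> dom p = {}"
    "card (dom p) + length xs \<le> k" "proper_partial E p"
    "\<forall>q. dom q = dom p \<union> set xs \<and> (\<forall>x\<in>dom p. q x = p x) \<and> proper_partial E q
        \<longrightarrow> spoiler_wins V E k r q"
  shows "spoiler_wins V E k (length xs + r) p"
  using assms
proof (induction xs arbitrary: p)
  case Nil
  then show ?case by auto
next
  case (Cons x xs)
  have xn: "x \<notin> dom p" using Cons.prems by auto
  have card: "card ((dom p - {}) \<union> {x}) \<le> k"
    using Cons.prems(1,5) xn by (simp add: card_insert_if)
  have "\<forall>c. \<not> proper_partial E ((p |` (dom p - {}))(x \<mapsto> c))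
             \<or> spoiler_wins V E k (length xs + r) ((p |` (dom p - {}))(x \<mapsto> c))"
  proof
    fix c
    let ?p = "p(x \<mapsto> c)"
    show "\<not> proper_partial E ((p |` (dom p - {}))(x \<mapsto> c))
             \<or> spoiler_wins V E k (length xs + r) ((p |` (dom p - {}))(x \<mapsto> c))"
    proof (cases "proper_partial E ?p")
      case True
      have "spoiler_wins V E k (length xs + r) ?p"
      proof (rule Cons.IH)
        show "finite (dom ?p)" using Cons.prems(1) by simp
        show "distinct xs" "set xs \<subseteq> V" using Cons.prems by auto
        show "set xs \<inter> dom ?p = {}" using Cons.prems by auto
        show "card (dom ?p) + length xs \<le> k" using Cons.prems(1,5) xn by (simp add: card_insert_if)
        show "proper_partial E ?p" by fact
        show "\<forall>q. dom q = dom ?p \<union> set xs \<and> (\<forall>y\<in>dom ?p. q y = ?p y) \<and> proper_partial E q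
          \<longrightarrow> spoiler_wins V E k r q"
        proof (intro allI impI)
          fix q assume q: "dom q = dom ?p \<union> set xs \<and> (\<forall>y\<in>dom ?p. q y = ?p y) \<and> proper_partial E q"
          have "dom q = dom p \<union> set (x # xs)" using q by auto
          moreover have "\<forall>y\<in>dom p. q y = p y" using q xn by auto
          ultimately show "spoiler_wins V E k r q" using Cons.prems(7) q by blast
        qed
      qed
      then show ?thesis by (simp add: restrict_dom_self)
    qed (simp add: restrict_dom_self)
  qed
  moreover have "x \<in> V" using Cons.prems by auto
  ultimately show ?case using card by (auto intro!: exI[of _ "{}"] exI[of _ x])
qed

definition col :: "color \<Rightarrow> nat" where
  "col c = (case c of Red \<Rightarrow> 0 | Blue \<Rightarrow> 1 | Green \<Rightarrow> 2)"

lemma col_lt: "col c < 3" by (cases c) (auto simp: col_def)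
lemma col_inj: "col a = col b \<Longrightarrow> a = b" by (cases a; cases b) (auto simp: col_def)

lemma W_le: "spoiler_wins V E k r Map.empty \<Longrightarrow> W V E \<le> k"
  unfolding W_def by (rule Least_le) blast

lemma proper_partialD:
  "proper_partial E p \<Longrightarrow> p u = Some a \<Longrightarrow> p w = Some b \<Longrightarrow> E u w \<Longrightarrow> a \<noteq> b"
  unfolding proper_partial_def by blast

lemma proper_empty: "proper_partial E Map.empty" by (simp add: proper_partial_def)

theorem theorem2:
  fixes V :: "'a set" and E :: "'a \<Rightarrow> 'a \<Rightarrow> bool"
  assumes "simple_graph V E"
    and "chromatic_number V E > 3"
  shows "W V E \<le> min (3 * independence_number V E) (card V - independence_number V E) + 1"
proof -
  have finV: "finite V" and irr: "\<forall>u\<in>V. \<not> E u u" using assms(1) by (auto simp: simple_graph_def)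
  define \<alpha> where "\<alpha> = independence_number V E"
  define C where "C = {card S | S. S \<subseteq> V \<and> (\<forall>u\<in>S. \<forall>w\<in>S. \<not> E u w)}"
  have finC: "finite C"
  proof (rule finite_subset)
    show "C \<subseteq> {..card V}" unfolding C_def using finV by (auto intro: card_mono)
  qed simp
  have "0 \<in> C" unfolding C_def by force
  hence "\<alpha> \<in> C" unfolding \<alpha>_def independence_number_def C_def[symmetric] using finC
    by (intro Max_in) auto
  then obtain I where IV: "I \<subseteq> V" and Iind: "\<forall>u\<in>I. \<forall>w\<in>I. \<not> E u w" and cardI: "card I = \<alpha>"
    unfolding C_def by auto
  have ale: "card S \<le> \<alpha>" if "S \<subseteq> V" "\<forall>u\<in>S. \<forall>w\<in>S. \<not> E u w" for S
  proof -
    have "card S \<in> C" unfolding C_def using that by auto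
    then show ?thesis unfolding \<alpha>_def independence_number_def C_def[symmetric] using finC by simp
  qed
  have no3: False if "\<forall>v\<in>V. f v < (3::nat)" "\<forall>u\<in>V. \<forall>w\<in>V. E u w \<longrightarrow> f u \<noteq> f w" for f
  proof -
    have "chromatic_number V E \<le> 3" unfolding chromatic_number_def
      by (rule Least_le) (use that in blast)
    then show False using assms(2) by simp
  qed
  have Vne: "V \<noteq> {}"
  proof
    assume "V = {}"
    then show False using no3[of "\<lambda>_. 0"] by simp
  qed
  then obtain v0 where "v0 \<in> V" by auto
  hence "card {v0} \<le> \<alpha>" using irr by (intro ale) auto
  hence a1: "\<alpha> \<ge> 1" by simp
  have aV: "\<alpha> \<le> card V" using cardI IV finV card_mono by blast
  have finI: "finite I" using IV finV finite_subset by blast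
  have W1: "W V E \<le> card V - \<alpha> + 1"
  proof -
    define k where "k = card V - \<alpha> + 1"
    obtain xs where xs: "set xs = V - I" "distinct xs" using finV finite_distinct_list by blast
    have lxs: "length xs = card V - \<alpha>"
      using distinct_card[OF xs(2)] xs(1) cardI card_Diff_subset[OF finI IV] by simp
    have step: "spoiler_wins V E k 1 q" if q: "dom q = V - I" "proper_partial E q" for q
    proof (rule ccontr)
      assume nw: "\<not> spoiler_wins V E k 1 q"
      have ex: "\<exists>c. proper_partial E (q(v \<mapsto> c))" if "v \<in> I" for v
      proof (rule ccontr)
        assume "\<nexists>c. proper_partial E (q(v \<mapsto> c))"
        moreover have "card ((dom q - {}) \<union> {v}) \<le> k"
        proof -
          have "card ((dom q - {}) \<union> {v}) \<le> card (dom q) + 1"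
            using q(1) finV by (simp add: card_insert_if)
          also have "card (dom q) = card V - \<alpha>" using q(1) cardI card_Diff_subset[OF finI IV] by simp
          finally show ?thesis unfolding k_def .
        qed
        moreover have "v \<in> V" using that IV by blast
        ultimately have "spoiler_wins V E k (Suc 0) q"
          unfolding spoiler_wins.simps
          by (intro exI[of _ "{}"] exI[of _ v]) (simp add: restrict_dom_self)
        then show False using nw by simp
      qed
      hence ex2: "\<forall>v\<in>I. \<exists>c. proper_partial E (q(v \<mapsto> c))" by blast
      obtain cf where cf: "\<forall>v\<in>I. proper_partial E (q(v \<mapsto> cf v))" using bchoice[OF ex2] by blast
      define g where "g v = (if v \<in> I then cf v else the (q v))" for v
      have qg: "q v = Some (g v)" if "v \<in> V" "v \<notin> I" for v
      proof -
        have "v \<in> dom q" using that q(1) by simp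
        then obtain c where "q v = Some c" by blast
        then show ?thesis using that by (simp add: g_def)
      qed
      show False
      proof (rule no3[of "\<lambda>v. col (g v)"])
        show "\<forall>v\<in>V. col (g v) < 3" by (simp add: col_lt)
        show "\<forall>u\<in>V. \<forall>w\<in>V. E u w \<longrightarrow> col (g u) \<noteq> col (g w)"
        proof (intro ballI impI notI)
          fix u w assume uw: "u \<in> V" "w \<in> V" "E u w" "col (g u) = col (g w)"
          hence eq: "g u = g w" by (simp add: col_inj)
          consider "u \<in> I" "w \<in> I" | "u \<in> I" "w \<notin> I" | "u \<notin> I" "w \<in> I" | "u \<notin> I" "w \<notin> I" by blast
          then show False
          proof cases
            case 1 then show ?thesis using Iind uw by blast
          next
            case 2
            have "u \<noteq> w" using 2 by auto
            have pp: "proper_partial E (q(u \<mapsto> cf u))" using cf 2 by blast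
            have a: "(q(u \<mapsto> cf u)) u = Some (g u)" using 2 by (simp add: g_def)
            have b: "(q(u \<mapsto> cf u)) w = Some (g w)" using \<open>u \<noteq> w\<close> qg[of w] 2 uw by simp
            show ?thesis using proper_partialD[OF pp a b uw(3)] eq by simp
          next
            case 3
            have "u \<noteq> w" using 3 by auto
            have pp: "proper_partial E (q(w \<mapsto> cf w))" using cf 3 by blast
            have a: "(q(w \<mapsto> cf w)) w = Some (g w)" using 3 by (simp add: g_def)
            have b: "(q(w \<mapsto> cf w)) u = Some (g u)" using \<open>u \<noteq> w\<close> qg[of u] 3 uw by simp
            show ?thesis using proper_partialD[OF pp b a uw(3)] eq by simp
          next
            case 4
            then show ?thesis using proper_partialD[OF q(2) qg[OF uw(1) 4(1)] qg[OF uw(2) 4(2)] uw(3)] eq by simp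
          qed
        qed
      qed
    qed
    have "spoiler_wins V E k (length xs + 1) Map.empty"
    proof (rule place_list)
      show "\<forall>q. dom q = dom Map.empty \<union> set xs \<and> (\<forall>x\<in>dom Map.empty. q x = None) \<and> proper_partial E q
          \<longrightarrow> spoiler_wins V E k 1 q" using step xs(1) by auto
    qed (use xs lxs k_def proper_empty in auto)
    then show ?thesis using W_le k_def by blast
  qed
  have W2: "W V E \<le> 3 * \<alpha> + 1" if big: "3 * \<alpha> + 1 \<le> card V"
  proof -
    obtain T where T: "T \<subseteq> V" "card T = 3 * \<alpha> + 1" "finite T"
      using obtain_subset_with_card_n[OF big] by blast
    obtain xs where xs: "set xs = T" "distinct xs" using T(3) finite_distinct_list by blast
    have lxs: "length xs = 3 * \<alpha> + 1" using distinct_card[OF xs(2)] xs(1) T(2) by simp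
    have step: "False" if q: "dom q = T" "proper_partial E q" for q
    proof -
      define K where "K c = {x\<in>T. q x = Some c}" for c
      have Kle: "card (K c) \<le> \<alpha>" for c
      proof (rule ale)
        show "K c \<subseteq> V" using T(1) K_def by auto
        show "\<forall>u\<in>K c. \<forall>w\<in>K c. \<not> E u w" using q(2) unfolding K_def proper_partial_def by blast
      qed
      have sub: "T \<subseteq> K Red \<union> K Blue \<union> K Green"
      proof
        fix x assume "x \<in> T"
        then obtain c where "q x = Some c" using q(1) by auto
        then show "x \<in> K Red \<union> K Blue \<union> K Green" using \<open>x \<in> T\<close> unfolding K_def by (cases c) auto
      qed
      have fin: "finite (K Red \<union> K Blue \<union> K Green)" using T(3) unfolding K_def by auto
      have "card T \<le> card (K Red \<union> K Blue \<union> K Green)" using card_mono[OF fin sub] .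
      also have "\<dots> \<le> card (K Red) + card (K Blue) + card (K Green)"
        using card_Un_le[of "K Red \<union> K Blue" "K Green"] card_Un_le[of "K Red" "K Blue"] by linarith
      also have "\<dots> \<le> 3 * \<alpha>" using Kle[of Red] Kle[of Blue] Kle[of Green] by simp
      finally show False using T(2) by simp
    qed
    have "spoiler_wins V E (3 * \<alpha> + 1) (length xs + 0) Map.empty"
    proof (rule place_list)
      show "\<forall>q. dom q = dom Map.empty \<union> set xs \<and> (\<forall>x\<in>dom Map.empty. q x = None) \<and> proper_partial E q
          \<longrightarrow> spoiler_wins V E (3 * \<alpha> + 1) 0 q" using step xs(1) by auto
    qed (use xs lxs T proper_empty in auto)
    then show ?thesis using W_le by blast
  qed
  show ?thesis
  proof (cases "3 * \<alpha> \<le> card V - \<alpha>")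
    case True
    then have "3 * \<alpha> + 1 \<le> card V" using a1 aV by linarith
    then show ?thesis using W2 True unfolding \<alpha>_def[symmetric] by simp
  next
    case False
    then show ?thesis using W1 unfolding \<alpha>_def[symmetric] by simp
  qed
qed

end
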